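(* Let $(X_1,\prec_1)$, $(X_2,\prec_2)$ be finite strict posets. (i) If $(X_1\dot\cup X_2,A,\prec)$ is an alignment of these two posets, then $R=\{(x,y)\in X_1\times X_2:\{x,y\}\in A\}$ satisfies (M) and (P'), $A$ consists exactly of the edges $\{x,y\}$ with $(x,y)\in R$, and the columns are exactly the sets $\{x,y\}$ with $(x,y)\in R$ together with the singletons $\{z\}$ of elements $z$ not occurring in any pair of $R$. (ii) Conversely, if $R\subseteq X_1\times X_2$ satisfies (M) and (P'), then for the graph $(X_1\dot\cup X_2,R)$ (with edges $\{x,y\}$ for $(x,y)\in R$), whose columns are the pairs $\{x,y\}$, $(x,y)\in R$, and the singletons of unmatched elements, there exists a strict partial order $\prec$ on its columns such that $(X_1\dot\cup X_2,R,\prec)$ is an alignment of $(X_1,\prec_1)$ and $(X_2,\prec_2)$.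
   Context: Given a family of finite strict posets $(X_a,\prec_a)$, $a\in I$, with $X=\dot\bigcup_a X_a$ and a simple undirected graph $(X,A)$ with set of connected components ("columns") $\mathcal{C}(X,A)$, an alignment is a triple $(X,A,\prec)$ where $\prec$ is a strict partial order on $\mathcal{C}(X,A)$ such that: (P1) every column induces a complete subgraph; (P2) every column contains at most one element of each $X_a$; (P3) if $x\in P$, $y\in Q$ with $x,y\in X_a$ and $x\prec_a y$ then $P\prec Q$; (P4) if $P\prec Q$, $x\in P$, $y\in Q$ with $x,y\in X_a$, then $x\prec_a y$ or $x,y$ are incomparable w.r.t. $\prec_a$. For a relation $R\subseteq X_1\times X_2$: (M) means $(x,y),(x,z)\in R$ imply $y=z$, and $(x,z),(y,z)\in R$ imply $x=y$; (P') means there is a strict partial order $\lessdot$ on $R$ such that for $(u,v),(x,y)\in R$, $u\prec_1 x$ or $v\prec_2 y$ implies $(u,v)\lessdot(x,y)$. *)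

theory Defs
  imports Main
begin

definition strict_po_on :: "'a set \<Rightarrow> ('a \<Rightarrow> 'a \<Rightarrow> bool) \<Rightarrow> bool" where
  "strict_po_on S r \<longleftrightarrow>
     (\<forall>x\<in>S. \<not> r x x) \<and>
     (\<forall>x\<in>S. \<forall>y\<in>S. \<forall>z\<in>S. r x y \<and> r y z \<longrightarrow> r x z)"

definition simple_graph :: "'a set \<Rightarrow> 'a set set \<Rightarrow> bool" where
  "simple_graph X A \<longleftrightarrow> (\<forall>e\<in>A. \<exists>x y. x \<in> X \<and> y \<in> X \<and> x \<noteq> y \<and> e = {x, y})"

definition adj :: "'a set set \<Rightarrow> ('a \<times> 'a) set" where
  "adj A = {(x, y). {x, y} \<in> A}"

definition columns :: "'a set \<Rightarrow> 'a set set \<Rightarrow> 'a set set" where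
  "columns X A = {{y \<in> X. (x, y) \<in> (adj A)\<^sup>*} | x. x \<in> X}"

definition alignment ::
  "'i set \<Rightarrow> ('i \<Rightarrow> 'a set) \<Rightarrow> ('i \<Rightarrow> 'a \<Rightarrow> 'a \<Rightarrow> bool)
     \<Rightarrow> 'a set set \<Rightarrow> ('a set \<Rightarrow> 'a set \<Rightarrow> bool) \<Rightarrow> bool" where
  "alignment I Xf lt A prec \<longleftrightarrow>
     (let X = (\<Union>a\<in>I. Xf a); C = columns X A in
       simple_graph X A \<and>
       strict_po_on C prec \<and>
       \<comment> \<open>(P1)\<close>
       (\<forall>P\<in>C. \<forall>x\<in>P. \<forall>y\<in>P. x \<noteq> y \<longrightarrow> {x, y} \<in> A) \<and>
       \<comment> \<open>(P2)\<close>
       (\<forall>P\<in>C. \<forall>a\<in>I. \<forall>x\<in>P \<inter> Xf a. \<forall>y\<in>P \<inter> Xf a. x = y) \<and>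
       \<comment> \<open>(P3)\<close>
       (\<forall>P\<in>C. \<forall>Q\<in>C. \<forall>a\<in>I. \<forall>x\<in>P. \<forall>y\<in>Q.
          x \<in> Xf a \<and> y \<in> Xf a \<and> lt a x y \<longrightarrow> prec P Q) \<and>
       \<comment> \<open>(P4)\<close>
       (\<forall>P\<in>C. \<forall>Q\<in>C. \<forall>a\<in>I. \<forall>x\<in>P. \<forall>y\<in>Q.
          prec P Q \<and> x \<in> Xf a \<and> y \<in> Xf a \<longrightarrow>
            lt a x y \<or> (\<not> lt a x y \<and> \<not> lt a y x)))"

definition fam2 :: "'a set \<Rightarrow> 'a set \<Rightarrow> nat \<Rightarrow> 'a set" where
  "fam2 X1 X2 i = (if i = 1 then X1 else X2)"

definition ord2 :: "('a \<Rightarrow> 'a \<Rightarrow> bool) \<Rightarrow> ('a \<Rightarrow> 'a \<Rightarrow> bool) \<Rightarrow> nat \<Rightarrow> 'a \<Rightarrow> 'a \<Rightarrow> bool" where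
  "ord2 lt1 lt2 i = (if i = 1 then lt1 else lt2)"

definition prop_M :: "('a \<times> 'b) set \<Rightarrow> bool" where
  "prop_M R \<longleftrightarrow>
     (\<forall>x y z. (x, y) \<in> R \<and> (x, z) \<in> R \<longrightarrow> y = z) \<and>
     (\<forall>x y z. (x, z) \<in> R \<and> (y, z) \<in> R \<longrightarrow> x = y)"

definition prop_P' :: "('a \<Rightarrow> 'a \<Rightarrow> bool) \<Rightarrow> ('b \<Rightarrow> 'b \<Rightarrow> bool) \<Rightarrow> ('a \<times> 'b) set \<Rightarrow> bool" where
  "prop_P' lt1 lt2 R \<longleftrightarrow>
     (\<exists>ld. strict_po_on R ld \<and>
        (\<forall>u v x y. (u, v) \<in> R \<and> (x, y) \<in> R \<and> (lt1 u x \<or> lt2 v y) \<longrightarrow> ld (u, v) (x, y)))"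

definition edges_of :: "('a \<times> 'a) set \<Rightarrow> 'a set set" where
  "edges_of R = {{x, y} | x y. (x, y) \<in> R}"

definition pair_columns :: "'a set \<Rightarrow> 'a set \<Rightarrow> ('a \<times> 'a) set \<Rightarrow> 'a set set" where
  "pair_columns X1 X2 R =
     {{x, y} | x y. (x, y) \<in> R} \<union>
     {{z} | z. z \<in> X1 \<union> X2 \<and> z \<notin> Domain R \<and> z \<notin> Range R}"

end

theory Submission
  imports Defs
begin


lemma adj_edges:
  assumes "X1 \<inter> X2 = {}" "R \<subseteq> X1 \<times> X2"
  shows "adj (edges_of R) = R \<union> R\<inverse>"
  unfolding adj_def edges_of_def
  by (auto simp: doubleton_eq_iff)

lemma rtr_sub:
  assumes "X1 \<inter> X2 = {}" "R \<subseteq> X1 \<times> X2" "prop_M R"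
  shows "(R \<union> R\<inverse>)\<^sup>* = (R \<union> R\<inverse>)\<^sup>="
proof
  show "(R \<union> R\<inverse>)\<^sup>* \<subseteq> (R \<union> R\<inverse>)\<^sup>="
  proof
    fix p assume "p \<in> (R \<union> R\<inverse>)\<^sup>*"
    then obtain a b where p: "p = (a,b)" and ab: "(a,b) \<in> (R \<union> R\<inverse>)\<^sup>*" by (cases p) auto
    from ab have "(a,b) \<in> (R \<union> R\<inverse>)\<^sup>="
    proof (induction rule: rtrancl_induct)
      case base then show ?case by simp
    next
      case (step y z)
      from step.IH step.hyps(2) assms show ?case
        unfolding prop_M_def by blast
    qed
    then show "p \<in> (R \<union> R\<inverse>)\<^sup>=" using p by simp
  qed
next
  show "(R \<union> R\<inverse>)\<^sup>= \<subseteq> (R \<union> R\<inverse>)\<^sup>*" by auto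
qed

lemma cols_eq:
  assumes d: "X1 \<inter> X2 = {}" and s: "R \<subseteq> X1 \<times> X2" and m: "prop_M R"
  shows "columns (X1 \<union> X2) (edges_of R) = pair_columns X1 X2 R"
proof -
  have col: "{y \<in> X1 \<union> X2. (x, y) \<in> (adj (edges_of R))\<^sup>*} = {y \<in> X1 \<union> X2. y = x \<or> (x,y) \<in> R \<or> (y,x) \<in> R}" for x
    using adj_edges[OF d s] rtr_sub[OF d s m] by auto
  have mm: "\<And>x y z. (x, y) \<in> R \<Longrightarrow> (x, z) \<in> R \<Longrightarrow> y = z" "\<And>x y z. (x, z) \<in> R \<Longrightarrow> (y, z) \<in> R \<Longrightarrow> x = y"
    using m unfolding prop_M_def by blast+
  have c1: "{y \<in> X1 \<union> X2. y = x \<or> (x,y) \<in> R \<or> (y,x) \<in> R} = {x, y}" if "(x,y) \<in> R" for x y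
    using that mm s d by blast
  have c2: "{y \<in> X1 \<union> X2. y = x \<or> (x,y) \<in> R \<or> (y,x) \<in> R} = {y, x}" if "(y,x) \<in> R" for x y
    using that mm s d by blast
  have c3: "{y \<in> X1 \<union> X2. y = x \<or> (x,y) \<in> R \<or> (y,x) \<in> R} = {x}" if "x \<in> X1 \<union> X2" "x \<notin> Domain R" "x \<notin> Range R" for x
    using that by blast
  show ?thesis
  proof
    show "columns (X1 \<union> X2) (edges_of R) \<subseteq> pair_columns X1 X2 R"
    proof
      fix P assume "P \<in> columns (X1 \<union> X2) (edges_of R)"
      then obtain x where x: "x \<in> X1 \<union> X2" and P: "P = {y \<in> X1 \<union> X2. y = x \<or> (x,y) \<in> R \<or> (y,x) \<in> R}"
        unfolding columns_def col by blast
      show "P \<in> pair_columns X1 X2 R"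
      proof (cases "x \<in> Domain R")
        case True then obtain y where "(x,y) \<in> R" by blast
        then show ?thesis using c1 P unfolding pair_columns_def by blast
      next
        case F1: False
        show ?thesis
        proof (cases "x \<in> Range R")
          case True then obtain y where "(y,x) \<in> R" by blast
          then show ?thesis using c2 P unfolding pair_columns_def by blast
        next
          case False
          then show ?thesis using c3[OF x F1 False] P x F1 unfolding pair_columns_def by blast
        qed
      qed
    qed
  next
    show "pair_columns X1 X2 R \<subseteq> columns (X1 \<union> X2) (edges_of R)"
    proof
      fix P assume "P \<in> pair_columns X1 X2 R"
      then consider (a) x y where "(x,y) \<in> R" "P = {x,y}"
        | (b) z where "z \<in> X1 \<union> X2" "z \<notin> Domain R" "z \<notin> Range R" "P = {z}"
        unfolding pair_columns_def by blast
      then show "P \<in> columns (X1 \<union> X2) (edges_of R)"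
      proof cases
        case a
        then have "x \<in> X1 \<union> X2" using s by blast
        then show ?thesis using a c1[OF a(1)] unfolding columns_def col by blast
      next
        case b
        then show ?thesis using c3[OF b(1-3)] unfolding columns_def col by blast
      qed
    qed
  qed
qed



locale L2 =
  fixes X1 X2 :: "'a set" and lt1 lt2 :: "'a \<Rightarrow> 'a \<Rightarrow> bool" and R :: "('a \<times> 'a) set"
    and ld :: "'a \<times> 'a \<Rightarrow> 'a \<times> 'a \<Rightarrow> bool"
  assumes d: "X1 \<inter> X2 = {}" and po1: "strict_po_on X1 lt1" and po2: "strict_po_on X2 lt2"
    and s: "R \<subseteq> X1 \<times> X2" and m: "prop_M R" and ldpo: "strict_po_on R ld"
    and ldm: "\<And>u v x y. (u, v) \<in> R \<Longrightarrow> (x, y) \<in> R \<Longrightarrow> lt1 u x \<or> lt2 v y \<Longrightarrow> ld (u, v) (x, y)"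
begin

definition W where "W x y \<longleftrightarrow> (x\<in>X1 \<and> y\<in>X1 \<and> lt1 x y) \<or> (x\<in>X2 \<and> y\<in>X2 \<and> lt2 x y)"
definition on where "on x n \<longleftrightarrow> x = fst n \<or> x = snd n"
definition below where "below x n \<longleftrightarrow> (x\<in>X1 \<and> lt1 x (fst n)) \<or> (x\<in>X2 \<and> lt2 x (snd n))"
definition above where "above n y \<longleftrightarrow> (y\<in>X1 \<and> lt1 (fst n) y) \<or> (y\<in>X2 \<and> lt2 (snd n) y)"
definition C where "C = pair_columns X1 X2 R"
definition Bc where "Bc = {(P,Q). P\<in>C \<and> Q\<in>C \<and> (\<exists>x\<in>P. \<exists>y\<in>Q. W x y)}"
definition Inv where "Inv P Q \<longleftrightarrow> (\<exists>x\<in>P. \<exists>y\<in>Q. W x y) \<or>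
  (\<exists>n1 n2 x y. n1\<in>R \<and> n2\<in>R \<and> x\<in>P \<and> y\<in>Q \<and> (n1=n2 \<or> ld n1 n2) \<and> (on x n1 \<or> below x n1)
     \<and> (on y n2 \<or> above n2 y) \<and> (ld n1 n2 \<or> below x n1 \<or> above n2 y))"

lemma ld_irr: "n \<in> R \<Longrightarrow> \<not> ld n n" using ldpo unfolding strict_po_on_def by blast
lemma ld_trans: "n \<in> R \<Longrightarrow> k \<in> R \<Longrightarrow> l \<in> R \<Longrightarrow> ld n k \<Longrightarrow> ld k l \<Longrightarrow> ld n l"
  using ldpo unfolding strict_po_on_def by blast
lemma lt1_irr: "x \<in> X1 \<Longrightarrow> \<not> lt1 x x" using po1 unfolding strict_po_on_def by blast
lemma lt2_irr: "x \<in> X2 \<Longrightarrow> \<not> lt2 x x" using po2 unfolding strict_po_on_def by blast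
lemma lt1_trans: "x \<in> X1 \<Longrightarrow> y \<in> X1 \<Longrightarrow> z \<in> X1 \<Longrightarrow> lt1 x y \<Longrightarrow> lt1 y z \<Longrightarrow> lt1 x z"
  using po1 unfolding strict_po_on_def by blast
lemma lt2_trans: "x \<in> X2 \<Longrightarrow> y \<in> X2 \<Longrightarrow> z \<in> X2 \<Longrightarrow> lt2 x y \<Longrightarrow> lt2 y z \<Longrightarrow> lt2 x z"
  using po2 unfolding strict_po_on_def by blast
lemma mm: "\<And>x y z. (x, y) \<in> R \<Longrightarrow> (x, z) \<in> R \<Longrightarrow> y = z" "\<And>x y z. (x, z) \<in> R \<Longrightarrow> (y, z) \<in> R \<Longrightarrow> x = y"
    using m unfolding prop_M_def by blast+

lemma ldm': "n \<in> R \<Longrightarrow> k \<in> R \<Longrightarrow> lt1 (fst n) (fst k) \<or> lt2 (snd n) (snd k) \<Longrightarrow> ld n k"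
  using ldm[of "fst n" "snd n" "fst k" "snd k"] by simp

lemma inR: "n \<in> R \<Longrightarrow> fst n \<in> X1 \<and> snd n \<in> X2" using s by auto

lemma dX: "x \<in> X1 \<Longrightarrow> x \<in> X2 \<Longrightarrow> False" using d by blast

lemma on_eq: assumes "m \<in> R" "n \<in> R" "on x m" "on x n" shows "m = n"
proof -
  obtain a b c e where mn: "m = (a,b)" "n = (c,e)" by (cases m, cases n) auto
  have "a \<in> X1" "b \<in> X2" "c \<in> X1" "e \<in> X2" using assms(1,2) inR mn by auto
  then show ?thesis using assms mn mm dX unfolding on_def by (metis fst_conv snd_conv)
qed

lemma L1: assumes "m \<in> R" "n \<in> R" "on x m" "below x n" shows "ld m n"
proof -
  have "fst m \<in> X1" "snd m \<in> X2" using assms(1) inR by auto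
  then have "lt1 (fst m) (fst n) \<or> lt2 (snd m) (snd n)" using assms(3,4) dX unfolding on_def below_def by metis
  then show ?thesis using ldm' assms(1,2) by blast
qed
lemma L3: assumes "m \<in> R" "n \<in> R" "on y m" "above n y" shows "ld n m"
proof -
  have "fst m \<in> X1" "snd m \<in> X2" using assms(1) inR by auto
  then have "lt1 (fst n) (fst m) \<or> lt2 (snd n) (snd m)" using assms(3,4) dX unfolding on_def above_def by metis
  then show ?thesis using ldm' assms(1,2) by blast
qed
lemma L5: assumes "m \<in> R" "W x y" "on y m" shows "below x m"
proof -
  have "fst m \<in> X1" "snd m \<in> X2" using assms(1) inR by auto
  then show ?thesis using assms(2,3) dX unfolding on_def below_def W_def by metis
qed
lemma L6: assumes "m \<in> R" "W q q'" "on q m" shows "above m q'"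
proof -
  have "fst m \<in> X1" "snd m \<in> X2" using assms(1) inR by auto
  then show ?thesis using assms(2,3) dX unfolding on_def above_def W_def by metis
qed
lemma L7: assumes "n \<in> R" "above n y" "W y y'" shows "above n y'"
proof -
  have "fst n \<in> X1" "snd n \<in> X2" using assms(1) inR by auto
  then show ?thesis using assms(2,3) dX lt1_trans[of "fst n" y y'] lt2_trans[of "snd n" y y']
    unfolding above_def W_def by metis
qed
lemma L9: assumes "n \<in> R" "k \<in> R" "above n y" "below y k" shows "ld n k"
proof -
  have "fst n \<in> X1" "snd n \<in> X2" "fst k \<in> X1" "snd k \<in> X2" using assms(1,2) inR by auto
  then have "lt1 (fst n) (fst k) \<or> lt2 (snd n) (snd k)"
    using assms(3,4) dX lt1_trans[of "fst n" y "fst k"] lt2_trans[of "snd n" y "snd k"]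
    unfolding above_def below_def by metis
  then show ?thesis using ldm' assms(1,2) by blast
qed
lemma W_trans: assumes "W x y" "W y z" shows "W x z"
  using assms dX lt1_trans[of x y z] lt2_trans[of x y z] unfolding W_def by metis

lemma C_sub: "Q \<in> C \<Longrightarrow> Q \<subseteq> X1 \<union> X2"
  unfolding C_def pair_columns_def using s by blast
lemma col_uniq1: "Q \<in> C \<Longrightarrow> y \<in> Q \<Longrightarrow> q \<in> Q \<Longrightarrow> y \<in> X1 \<Longrightarrow> q \<in> X1 \<Longrightarrow> y = q"
  unfolding C_def pair_columns_def using s d by blast
lemma col_uniq2: "Q \<in> C \<Longrightarrow> y \<in> Q \<Longrightarrow> q \<in> Q \<Longrightarrow> y \<in> X2 \<Longrightarrow> q \<in> X2 \<Longrightarrow> y = q"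
  unfolding C_def pair_columns_def using s d by blast
lemma col_mixed: "Q \<in> C \<Longrightarrow> y \<in> Q \<Longrightarrow> q \<in> Q \<Longrightarrow> y \<in> X1 \<Longrightarrow> q \<in> X2 \<Longrightarrow> (y, q) \<in> R"
  unfolding C_def pair_columns_def using s d by blast

lemma col_cases:
  assumes "Q \<in> C" "y \<in> Q" "q \<in> Q"
  obtains "y = q" | m where "m \<in> R" "on y m" "on q m"
proof -
  have "y \<in> X1 \<union> X2" "q \<in> X1 \<union> X2" using C_sub assms by blast+
  then consider "y \<in> X1" "q \<in> X1" | "y \<in> X2" "q \<in> X2" | "y \<in> X1" "q \<in> X2" | "y \<in> X2" "q \<in> X1" by blast
  then show ?thesis
  proof cases
    case 1 then show ?thesis using that col_uniq1 assms by blast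
  next
    case 2 then show ?thesis using that col_uniq2 assms by blast
  next
    case 3 then have "(y,q) \<in> R" using col_mixed assms by blast
    then show ?thesis using that(2)[of "(y,q)"] unfolding on_def by simp
  next
    case 4 then have "(q,y) \<in> R" using col_mixed assms by blast
    then show ?thesis using that(2)[of "(q,y)"] unfolding on_def by simp
  qed
qed

lemma Inv_step:
  assumes I: "Inv P Q" and Q: "Q \<in> C" and q: "q \<in> Q" "q' \<in> Q'" "W q q'"
  shows "Inv P Q'"
proof -
  from I consider (c1) x y where "x \<in> P" "y \<in> Q" "W x y"
   | (c2) n1 n2 x y where "n1 \<in> R" "n2 \<in> R" "x \<in> P" "y \<in> Q" "n1 = n2 \<or> ld n1 n2"
    "on x n1 \<or> below x n1" "on y n2 \<or> above n2 y" "ld n1 n2 \<or> below x n1 \<or> above n2 y"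
    unfolding Inv_def by blast
  then show ?thesis
  proof cases
  case (c1 x y)
  then have x: "x \<in> P" and y: "y \<in> Q" and W: "W x y" by auto
  from Q y q(1) show ?thesis
  proof (cases rule: col_cases)
    case 1 then show ?thesis unfolding Inv_def using W_trans W q x by blast
  next
    case (2 mm)
    have "below x mm" using L5 2 W by blast
    moreover have "above mm q'" using L6 2 q by blast
    ultimately show ?thesis unfolding Inv_def using 2 x q by blast
  qed
next
  case (c2 n1 n2 x y)
  note h = c2
  from Q h(4) q(1) show ?thesis
  proof (cases rule: col_cases)
    case 1
    have "above n2 q'" using h(7) 1 L6 L7 h(2) q by blast
    then show ?thesis unfolding Inv_def using h q by blast
  next
    case (2 k)
    have "n2 = k \<or> ld n2 k" using h(7) on_eq L3 2 h(2) by blast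
    then have "n1 = k \<or> ld n1 k" using h(5) ld_trans h(1,2) 2(1) by blast
    moreover have "above k q'" using L6 2 q by blast
    ultimately show ?thesis unfolding Inv_def using 2 h q by blast
  qed
qed
  qed


lemma Inv_irr:
  assumes P: "P \<in> C" and I: "Inv P P" shows False
proof -
  from I consider (c1) x y where "x \<in> P" "y \<in> P" "W x y"
   | (c2) n1 n2 x y where "n1 \<in> R" "n2 \<in> R" "x \<in> P" "y \<in> P" "n1 = n2 \<or> ld n1 n2"
    "on x n1 \<or> below x n1" "on y n2 \<or> above n2 y" "ld n1 n2 \<or> below x n1 \<or> above n2 y"
    unfolding Inv_def by blast
  then show False
  proof cases
  case (c1 x y)
  then have x: "x \<in> P" and y: "y \<in> P" and W: "W x y" by auto
  from P x y show False
  proof (cases rule: col_cases)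
    case 1 then show ?thesis using W unfolding W_def using lt1_irr lt2_irr by blast
  next
    case (2 k)
    have k: "fst k \<in> X1" "snd k \<in> X2" using inR 2(1) by auto
    from W show ?thesis unfolding W_def
    proof (elim disjE conjE)
      assume "x \<in> X1" "y \<in> X1" "lt1 x y"
      then have "x = fst k" "y = fst k" using 2 k dX unfolding on_def by metis+
      then show False using lt1_irr \<open>lt1 x y\<close> k by simp
    next
      assume "x \<in> X2" "y \<in> X2" "lt2 x y"
      then have "x = snd k" "y = snd k" using 2 k dX unfolding on_def by metis+
      then show False using lt2_irr \<open>lt2 x y\<close> k by simp
    qed
  qed
next
  case (c2 n1 n2 x y)
  note h = c2
  have cyc: False if "ld n2 n1"
  proof -
    from h(5) show False
    proof
      assume "n1 = n2" then show False using that ld_irr h(1) by simp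
    next
      assume "ld n1 n2" then have "ld n1 n1" using ld_trans[OF h(1) h(2) h(1)] that by simp
      then show False using ld_irr h(1) by simp
    qed
  qed
  have strict: False if "n1 = n2" "on x n1" "on y n2"
  proof -
    from h(8) show False
    proof (elim disjE)
      assume "ld n1 n2" then show False using that ld_irr h(1) by simp
    next
      assume "below x n1" then have "ld n1 n1" using L1[OF h(1) h(1)] that by simp
      then show False using ld_irr h(1) by simp
    next
      assume "above n2 y" then have "ld n2 n2" using L3[OF h(2) h(2)] that by simp
      then show False using ld_irr h(2) by simp
    qed
  qed
  from P h(3) h(4) show False
  proof (cases rule: col_cases)
    case 1
    show False
    proof (cases "on x n1")
      case True
      show ?thesis
      proof (cases "on y n2")
        case True
        then have "n1 = n2" using on_eq[OF h(1) h(2)] 1 \<open>on x n1\<close> by simp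
        then show ?thesis using strict True \<open>on x n1\<close> by simp
      next
        case False
        then have "ld n2 n1" using h(7) L3[OF h(1) h(2)] 1 True by auto
        then show ?thesis using cyc by blast
      qed
    next
      case False
      then have b: "below x n1" using h(6) by blast
      show ?thesis
      proof (cases "on y n2")
        case True
        then have "ld n2 n1" using L1[OF h(2) h(1)] 1 b by simp
        then show ?thesis using cyc by blast
      next
        case False
        then have "ld n2 n1" using L9[OF h(2) h(1)] h(7) 1 b by simp
        then show ?thesis using cyc by blast
      qed
    qed
  next
    case (2 k)
    have a: "k = n1 \<or> ld k n1" using h(6) 2 on_eq[OF 2(1) h(1)] L1[OF 2(1) h(1)] by blast
    have b: "n2 = k \<or> ld n2 k" using h(7) 2 on_eq[OF h(2) 2(1)] L3[OF 2(1) h(2)] by blast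
    have "k = n1"
    proof (rule ccontr)
      assume "k \<noteq> n1"
      then have kn1: "ld k n1" using a by simp
      from b show False
      proof
        assume "n2 = k" then show False using cyc kn1 by simp
      next
        assume "ld n2 k" then show False using cyc ld_trans[OF h(2) 2(1) h(1)] kn1 by blast
      qed
    qed
    moreover have "n2 = k"
    proof (rule ccontr)
      assume "n2 \<noteq> k"
      then have "ld n2 k" using b by simp
      then show False using cyc \<open>k = n1\<close> by simp
    qed
    ultimately show False using strict 2 by simp
  qed
  qed
qed

lemma Bc_Inv: "(P, Q) \<in> Bc\<^sup>+ \<Longrightarrow> Inv P Q"
proof (induction rule: trancl_induct)
  case (base y) then show ?case unfolding Bc_def Inv_def by blast
next
  case (step y z)
  from step.hyps(2) obtain q q' where "y \<in> C" "q \<in> y" "q' \<in> z" "W q q'" unfolding Bc_def by blast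
  then show ?case using Inv_step[OF step.IH] by blast
qed

lemma Bc_C: "(P, Q) \<in> Bc\<^sup>+ \<Longrightarrow> P \<in> C"
  by (induction rule: trancl_induct) (auto simp: Bc_def)

lemma Bc_C2: "(P, Q) \<in> Bc\<^sup>+ \<Longrightarrow> Q \<in> C"
  by (induction rule: trancl_induct) (auto simp: Bc_def)

lemma Bc_irr: "(P, P) \<notin> Bc\<^sup>+"
proof
  assume a: "(P, P) \<in> Bc\<^sup>+"
  then have "P \<in> C" by (rule Bc_C)
  then show False using Inv_irr Bc_Inv a by blast
qed

end


lemma U2: "(\<Union>a\<in>{1::nat,2}. fam2 X1 X2 a) = X1 \<union> X2" by (auto simp: fam2_def)

lemma partii:
  assumes d: "X1 \<inter> X2 = {}" and po1: "strict_po_on X1 lt1" and po2: "strict_po_on X2 lt2"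
    and s: "R \<subseteq> X1 \<times> X2" and m: "prop_M R" and p: "prop_P' lt1 lt2 R"
  shows "\<exists>prec. alignment {1, 2} (fam2 X1 X2) (ord2 lt1 lt2) (edges_of R) prec"
proof -
  from p obtain ld where ldpo: "strict_po_on R ld" and
    ldm: "\<And>u v x y. (u, v) \<in> R \<Longrightarrow> (x, y) \<in> R \<Longrightarrow> lt1 u x \<or> lt2 v y \<Longrightarrow> ld (u, v) (x, y)"
    unfolding prop_P'_def by blast
  interpret L: L2 X1 X2 lt1 lt2 R ld
    using d po1 po2 s m ldpo ldm by unfold_locales auto
  define prec where "prec P Q \<longleftrightarrow> (P, Q) \<in> L.Bc\<^sup>+" for P Q
  have CC: "columns (X1 \<union> X2) (edges_of R) = L.C"
    using cols_eq[OF d s m] unfolding L.C_def .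
  have fa: "a \<in> {1::nat,2} \<Longrightarrow> (fam2 X1 X2 a = X1 \<and> ord2 lt1 lt2 a = lt1) \<or> (fam2 X1 X2 a = X2 \<and> ord2 lt1 lt2 a = lt2)" for a
    by (auto simp: fam2_def ord2_def)
  have sg: "simple_graph (X1 \<union> X2) (edges_of R)"
    unfolding simple_graph_def edges_of_def using s d by blast
  have spo: "strict_po_on L.C prec"
    unfolding strict_po_on_def prec_def using L.Bc_irr trancl_trans by metis
  have p1: "\<forall>P\<in>L.C. \<forall>x\<in>P. \<forall>y\<in>P. x \<noteq> y \<longrightarrow> {x, y} \<in> edges_of R"
    unfolding L.C_def pair_columns_def edges_of_def by (auto simp: doubleton_eq_iff)
  have p2: "\<forall>P\<in>L.C. \<forall>a\<in>{1,2}. \<forall>x\<in>P \<inter> fam2 X1 X2 a. \<forall>y\<in>P \<inter> fam2 X1 X2 a. x = y"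
    using fa L.col_uniq1 L.col_uniq2 by (metis IntE)
  have p3: "\<forall>P\<in>L.C. \<forall>Q\<in>L.C. \<forall>a\<in>{1,2}. \<forall>x\<in>P. \<forall>y\<in>Q.
          x \<in> fam2 X1 X2 a \<and> y \<in> fam2 X1 X2 a \<and> ord2 lt1 lt2 a x y \<longrightarrow> prec P Q"
  proof (intro ballI impI)
    fix P Q a x y assume h: "P \<in> L.C" "Q \<in> L.C" "a \<in> {1::nat,2}" "x \<in> P" "y \<in> Q"
      "x \<in> fam2 X1 X2 a \<and> y \<in> fam2 X1 X2 a \<and> ord2 lt1 lt2 a x y"
    then have "L.W x y" using fa[OF h(3)] unfolding L.W_def by auto
    then have "(P, Q) \<in> L.Bc" unfolding L.Bc_def using h by blast
    then show "prec P Q" unfolding prec_def by blast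
  qed
  have p4: "\<forall>P\<in>L.C. \<forall>Q\<in>L.C. \<forall>a\<in>{1,2}. \<forall>x\<in>P. \<forall>y\<in>Q.
          prec P Q \<and> x \<in> fam2 X1 X2 a \<and> y \<in> fam2 X1 X2 a \<longrightarrow>
            ord2 lt1 lt2 a x y \<or> (\<not> ord2 lt1 lt2 a x y \<and> \<not> ord2 lt1 lt2 a y x)"
  proof (intro ballI impI)
    fix P Q a x y assume h: "P \<in> L.C" "Q \<in> L.C" "a \<in> {1::nat,2}" "x \<in> P" "y \<in> Q"
      "prec P Q \<and> x \<in> fam2 X1 X2 a \<and> y \<in> fam2 X1 X2 a"
    have "\<not> ord2 lt1 lt2 a y x"
    proof
      assume "ord2 lt1 lt2 a y x"
      then have "L.W y x" using fa[OF h(3)] h(6) unfolding L.W_def by auto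
      then have "(Q, P) \<in> L.Bc" unfolding L.Bc_def using h by blast
      then have "(P, P) \<in> L.Bc\<^sup>+" using h(6) unfolding prec_def by auto
      then show False using L.Bc_irr by blast
    qed
    then show "ord2 lt1 lt2 a x y \<or> (\<not> ord2 lt1 lt2 a x y \<and> \<not> ord2 lt1 lt2 a y x)" by blast
  qed
  have "alignment {1, 2} (fam2 X1 X2) (ord2 lt1 lt2) (edges_of R) prec"
    unfolding alignment_def Let_def U2 CC using sg spo p1 p2 p3 p4 by blast
  then show ?thesis by blast
qed


lemma parti:
  assumes d: "X1 \<inter> X2 = {}"
    and al: "alignment {1, 2} (fam2 X1 X2) (ord2 lt1 lt2) A prec"
  shows "let R = {(x, y). x \<in> X1 \<and> y \<in> X2 \<and> {x, y} \<in> A} in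
          prop_M R \<and> prop_P' lt1 lt2 R \<and> A = edges_of R \<and>
          columns (X1 \<union> X2) A = pair_columns X1 X2 R"
proof -
  define X where "X = X1 \<union> X2"
  define C where "C = columns X A"
  define R where "R = {(x, y). x \<in> X1 \<and> y \<in> X2 \<and> {x, y} \<in> A}"
  define col where "col x = {y \<in> X. (x, y) \<in> (adj A)\<^sup>*}" for x
  have al': "simple_graph X A \<and> strict_po_on C prec \<and>
       (\<forall>P\<in>C. \<forall>x\<in>P. \<forall>y\<in>P. x \<noteq> y \<longrightarrow> {x, y} \<in> A) \<and>
       (\<forall>P\<in>C. \<forall>a\<in>{1::nat,2}. \<forall>x\<in>P \<inter> fam2 X1 X2 a. \<forall>y\<in>P \<inter> fam2 X1 X2 a. x = y) \<and>
       (\<forall>P\<in>C. \<forall>Q\<in>C. \<forall>a\<in>{1::nat,2}. \<forall>x\<in>P. \<forall>y\<in>Q.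
          x \<in> fam2 X1 X2 a \<and> y \<in> fam2 X1 X2 a \<and> ord2 lt1 lt2 a x y \<longrightarrow> prec P Q)"
  proof -
    have "simple_graph X A \<and> strict_po_on C prec \<and>
       (\<forall>P\<in>C. \<forall>x\<in>P. \<forall>y\<in>P. x \<noteq> y \<longrightarrow> {x, y} \<in> A) \<and>
       (\<forall>P\<in>C. \<forall>a\<in>{1::nat,2}. \<forall>x\<in>P \<inter> fam2 X1 X2 a. \<forall>y\<in>P \<inter> fam2 X1 X2 a. x = y) \<and>
       (\<forall>P\<in>C. \<forall>Q\<in>C. \<forall>a\<in>{1::nat,2}. \<forall>x\<in>P. \<forall>y\<in>Q.
          x \<in> fam2 X1 X2 a \<and> y \<in> fam2 X1 X2 a \<and> ord2 lt1 lt2 a x y \<longrightarrow> prec P Q) \<and>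
       (\<forall>P\<in>C. \<forall>Q\<in>C. \<forall>a\<in>{1::nat,2}. \<forall>x\<in>P. \<forall>y\<in>Q.
          prec P Q \<and> x \<in> fam2 X1 X2 a \<and> y \<in> fam2 X1 X2 a \<longrightarrow>
            ord2 lt1 lt2 a x y \<or> (\<not> ord2 lt1 lt2 a x y \<and> \<not> ord2 lt1 lt2 a y x))"
      using al unfolding alignment_def Let_def U2 X_def C_def .
    then show ?thesis by (elim conjE) (intro conjI)
  qed
  then have sg: "simple_graph X A" and spo: "strict_po_on C prec" by blast+
  have p2a: "P \<in> C \<Longrightarrow> x \<in> P \<Longrightarrow> y \<in> P \<Longrightarrow> x \<in> X1 \<Longrightarrow> y \<in> X1 \<Longrightarrow> x = y" for P x y
  proof -
    assume h: "P \<in> C" "x \<in> P" "y \<in> P" "x \<in> X1" "y \<in> X1"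
    have "\<forall>x\<in>P \<inter> fam2 X1 X2 1. \<forall>y\<in>P \<inter> fam2 X1 X2 1. x = y" using al' h(1) by blast
    then show "x = y" using h by (simp add: fam2_def)
  qed
  have p2b: "P \<in> C \<Longrightarrow> x \<in> P \<Longrightarrow> y \<in> P \<Longrightarrow> x \<in> X2 \<Longrightarrow> y \<in> X2 \<Longrightarrow> x = y" for P x y
  proof -
    assume h: "P \<in> C" "x \<in> P" "y \<in> P" "x \<in> X2" "y \<in> X2"
    have "\<forall>x\<in>P \<inter> fam2 X1 X2 2. \<forall>y\<in>P \<inter> fam2 X1 X2 2. x = y" using al' h(1) by blast
    then show "x = y" using h by (simp add: fam2_def)
  qed
  have p3a: "P \<in> C \<Longrightarrow> Q \<in> C \<Longrightarrow> x \<in> P \<Longrightarrow> y \<in> Q \<Longrightarrow> x \<in> X1 \<Longrightarrow> y \<in> X1 \<Longrightarrow> lt1 x y \<Longrightarrow> prec P Q" for P Q x y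
  proof -
    assume h: "P \<in> C" "Q \<in> C" "x \<in> P" "y \<in> Q" "x \<in> X1" "y \<in> X1" "lt1 x y"
    have "\<forall>x\<in>P. \<forall>y\<in>Q. x \<in> fam2 X1 X2 1 \<and> y \<in> fam2 X1 X2 1 \<and> ord2 lt1 lt2 1 x y \<longrightarrow> prec P Q"
      using al' h(1,2) by blast
    then show "prec P Q" using h by (simp add: fam2_def ord2_def) blast
  qed
  have p3b: "P \<in> C \<Longrightarrow> Q \<in> C \<Longrightarrow> x \<in> P \<Longrightarrow> y \<in> Q \<Longrightarrow> x \<in> X2 \<Longrightarrow> y \<in> X2 \<Longrightarrow> lt2 x y \<Longrightarrow> prec P Q" for P Q x y
  proof -
    assume h: "P \<in> C" "Q \<in> C" "x \<in> P" "y \<in> Q" "x \<in> X2" "y \<in> X2" "lt2 x y"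
    have "\<forall>x\<in>P. \<forall>y\<in>Q. x \<in> fam2 X1 X2 2 \<and> y \<in> fam2 X1 X2 2 \<and> ord2 lt1 lt2 2 x y \<longrightarrow> prec P Q"
      using al' h(1,2) by blast
    then show "prec P Q" using h by (simp add: fam2_def ord2_def) blast
  qed
  have colC: "x \<in> X \<Longrightarrow> col x \<in> C" for x unfolding C_def columns_def col_def by blast
  have colx: "x \<in> X \<Longrightarrow> x \<in> col x" for x unfolding col_def by blast
  have edge: "{x, y} \<in> A \<Longrightarrow> x \<in> X \<and> y \<in> X \<and> x \<noteq> y" for x y
  proof -
    assume "{x, y} \<in> A"
    then obtain a b where "a \<in> X" "b \<in> X" "a \<noteq> b" "{x,y} = {a,b}" using sg unfolding simple_graph_def by blast
    then show ?thesis by (auto simp: doubleton_eq_iff)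
  qed
  have symadj: "sym (adj A)" unfolding sym_def adj_def by (simp add: insert_commute)
  have symr: "sym ((adj A)\<^sup>*)" using sym_rtrancl[OF symadj] .
  have colsame: "{x, y} \<in> A \<Longrightarrow> col x = col y" for x y
  proof -
    assume e: "{x, y} \<in> A"
    then have xy: "(x, y) \<in> (adj A)\<^sup>*" unfolding adj_def by blast
    then have yx: "(y, x) \<in> (adj A)\<^sup>*" using symD[OF symr] by blast
    have "(x, z) \<in> (adj A)\<^sup>* \<longleftrightarrow> (y, z) \<in> (adj A)\<^sup>*" for z
    proof
      assume "(x, z) \<in> (adj A)\<^sup>*" then show "(y, z) \<in> (adj A)\<^sup>*" using rtrancl_trans[OF yx] by blast
    next
      assume "(y, z) \<in> (adj A)\<^sup>*" then show "(x, z) \<in> (adj A)\<^sup>*" using rtrancl_trans[OF xy] by blast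
    qed
    then show "col x = col y" unfolding col_def by simp
  qed
  have yin: "{x, y} \<in> A \<Longrightarrow> y \<in> col x" for x y
  proof -
    assume e: "{x, y} \<in> A"
    then have "y \<in> X" using edge by blast
    then show "y \<in> col x" using colx colsame[OF e] by simp
  qed
  have Rsub: "R \<subseteq> X1 \<times> X2" unfolding R_def by blast
  have M: "prop_M R"
    unfolding prop_M_def
  proof (intro conjI allI impI)
    fix x y z assume "(x, y) \<in> R \<and> (x, z) \<in> R"
    then have h: "{x,y} \<in> A" "{x,z} \<in> A" "y \<in> X2" "z \<in> X2" "x \<in> X" unfolding R_def X_def by auto
    show "y = z" using p2b[OF colC[OF h(5)] yin[OF h(1)] yin[OF h(2)] h(3,4)] .
  next
    fix x y z assume "(x, z) \<in> R \<and> (y, z) \<in> R"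
    then have h: "{z,x} \<in> A" "{z,y} \<in> A" "x \<in> X1" "y \<in> X1" "z \<in> X" unfolding R_def X_def by (simp_all add: insert_commute)
    show "x = y" using p2a[OF colC[OF h(5)] yin[OF h(1)] yin[OF h(2)] h(3,4)] .
  qed
  have AE: "A = edges_of R"
  proof
    show "A \<subseteq> edges_of R"
    proof
      fix e assume e: "e \<in> A"
      then obtain a b where ab: "e = {a, b}" "a \<in> X" "b \<in> X" "a \<noteq> b" using sg unfolding simple_graph_def by blast
      have ea: "{a,b} \<in> A" using e ab by simp
      have "b \<in> col a" "a \<in> col a" using yin[OF ea] colx[OF ab(2)] by auto
      note cc = colC[OF ab(2)]
      have "a \<in> X1 \<and> b \<in> X2 \<or> b \<in> X1 \<and> a \<in> X2"
        using ab p2a[OF cc \<open>a \<in> col a\<close> \<open>b \<in> col a\<close>] p2b[OF cc \<open>a \<in> col a\<close> \<open>b \<in> col a\<close>]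
        unfolding X_def by blast
      then show "e \<in> edges_of R"
      proof
        assume "a \<in> X1 \<and> b \<in> X2"
        then show ?thesis unfolding edges_of_def R_def using ea ab(1) by blast
      next
        assume "b \<in> X1 \<and> a \<in> X2"
        moreover have "{b,a} \<in> A" using ea by (simp add: insert_commute)
        moreover have "e = {b,a}" using ab(1) by (simp add: insert_commute)
        ultimately show ?thesis unfolding edges_of_def R_def by blast
      qed
    qed
  next
    show "edges_of R \<subseteq> A" unfolding edges_of_def R_def by blast
  qed
  have P: "prop_P' lt1 lt2 R"
    unfolding prop_P'_def
  proof (intro exI conjI allI impI)
    let ?ld = "\<lambda>p q. prec (col (fst p)) (col (fst q))"
    have RC: "p \<in> R \<Longrightarrow> col (fst p) \<in> C" for p using colC unfolding R_def X_def by auto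
    have s1: "\<forall>P\<in>C. \<not> prec P P" and s2: "\<forall>P\<in>C. \<forall>Q\<in>C. \<forall>S\<in>C. prec P Q \<and> prec Q S \<longrightarrow> prec P S"
      using spo unfolding strict_po_on_def by blast+
    show "strict_po_on R ?ld"
      unfolding strict_po_on_def
    proof (intro conjI ballI impI)
      fix p assume "p \<in> R" then show "\<not> ?ld p p" using s1 RC by blast
    next
      fix p q r assume "p \<in> R" "q \<in> R" "r \<in> R" "?ld p q \<and> ?ld q r"
      then show "?ld p r" using s2 RC[of p] RC[of q] RC[of r] by blast
    qed
    fix u v x y assume h: "(u, v) \<in> R \<and> (x, y) \<in> R \<and> (lt1 u x \<or> lt2 v y)"
    then have hh: "{u,v} \<in> A" "{x,y} \<in> A" "u \<in> X1" "v \<in> X2" "x \<in> X1" "y \<in> X2" unfolding R_def by auto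
    have X: "u \<in> X" "v \<in> X" "x \<in> X" "y \<in> X" using hh unfolding X_def by auto
    from h show "?ld (u, v) (x, y)"
    proof (elim conjE disjE)
      assume "lt1 u x" then show ?thesis using p3a[OF colC[OF X(1)] colC[OF X(3)] colx[OF X(1)] colx[OF X(3)] hh(3,5)] by simp
    next
      assume "lt2 v y" then have "prec (col v) (col y)"
        using p3b[OF colC[OF X(2)] colC[OF X(4)] colx[OF X(2)] colx[OF X(4)] hh(4,6)] by simp
      then show ?thesis using colsame[OF hh(1)] colsame[OF hh(2)] by simp
    qed
  qed
  have "columns (X1 \<union> X2) A = pair_columns X1 X2 R"
    using cols_eq[OF d Rsub M] AE by simp
  then show ?thesis using M P AE unfolding R_def Let_def by simp
qed


theorem lemma8:
  fixes X1 X2 :: "'a set" and lt1 lt2 :: "'a \<Rightarrow> 'a \<Rightarrow> bool"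
  assumes "finite X1" and "finite X2" and "X1 \<inter> X2 = {}"
    and "strict_po_on X1 lt1" and "strict_po_on X2 lt2"
  shows
    "(\<forall>A prec. alignment {1, 2} (fam2 X1 X2) (ord2 lt1 lt2) A prec \<longrightarrow>
        (let R = {(x, y). x \<in> X1 \<and> y \<in> X2 \<and> {x, y} \<in> A} in
          prop_M R \<and> prop_P' lt1 lt2 R \<and> A = edges_of R \<and>
          columns (X1 \<union> X2) A = pair_columns X1 X2 R))
     \<and>
     (\<forall>R. R \<subseteq> X1 \<times> X2 \<and> prop_M R \<and> prop_P' lt1 lt2 R \<longrightarrow>
        columns (X1 \<union> X2) (edges_of R) = pair_columns X1 X2 R \<and>
        (\<exists>prec. alignment {1, 2} (fam2 X1 X2) (ord2 lt1 lt2) (edges_of R) prec))"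
proof (intro conjI allI impI)
  fix A prec assume "alignment {1, 2} (fam2 X1 X2) (ord2 lt1 lt2) A prec"
  then show "let R = {(x, y). x \<in> X1 \<and> y \<in> X2 \<and> {x, y} \<in> A} in
          prop_M R \<and> prop_P' lt1 lt2 R \<and> A = edges_of R \<and>
          columns (X1 \<union> X2) A = pair_columns X1 X2 R"
    using parti[OF assms(3)] by blast
next
  fix R assume h: "R \<subseteq> X1 \<times> X2 \<and> prop_M R \<and> prop_P' lt1 lt2 R"
  then show "columns (X1 \<union> X2) (edges_of R) = pair_columns X1 X2 R"
    using cols_eq[OF assms(3)] by blast
  show "\<exists>prec. alignment {1, 2} (fam2 X1 X2) (ord2 lt1 lt2) (edges_of R) prec"
    using partii[OF assms(3,4,5)] h by blast
qed

end
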